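(* Let $X=\{x_0,\ldots,x_m\}$, $\tilde X=\{\tilde x_1,\ldots,\tilde x_q\}$ (commuting), $c\in\mathbb{R}^q\langle\langle X\rangle\rangle$ proper and $d\in\mathbb{R}^m[[\tilde X]]$ purely improper. Then the series $c\,\tilde\circ\,\delta_{(d^{-1}\circ c)^{\circ-1}}$ is a proper series in $\mathbb{R}^q\langle\langle X\rangle\rangle$ and is the unique fixed point of the map $e\mapsto c\,\tilde\circ\,\delta_{(d\circ e)}$ on the proper series of $\mathbb{R}^q\langle\langle X\rangle\rangle$, where $\circ$ between $d$ (or $d^{-1}$) and a noncommutative series denotes the Wiener-Fliess composition product.
   Context: $\mathbb{R}^\ell\langle\langle X\rangle\rangle$: formal power series in noncommuting letters with coefficients in $\mathbb{R}^\ell$; proper means zero constant term; purely improper means each component has nonzero constant term; componentwise products. $\mathbb{R}^m[[\tilde X]]$: formal power series in commuting letters with coefficients in $\mathbb{R}^m$; $d^{-1}$ is the componentwise Cauchy (multiplicative) inverse of purely improper $d$. Shuffle product $\sqcup\!\sqcup$: bilinear, $(x_i\eta)\sqcup\!\sqcup(x_j\xi)=x_i(\eta\sqcup\!\sqcup x_j\xi)+x_j(x_i\eta\sqcup\!\sqcup\xi)$, $\eta\sqcup\!\sqcup\emptyset=\emptyset\sqcup\!\sqcup\eta=\eta$; $g^{\sqcup\!\sqcup-1}$ the componentwise shuffle inverse. Wiener-Fliess composition for proper $e\in\mathbb{R}^q\langle\langle X\rangle\rangle$: $d\circ e=\sum_{\tilde\eta\in\tilde X^\ast}(d,\tilde\eta)e^{\sqcup\!\sqcup\tilde\eta}$,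 $e^{\sqcup\!\sqcup\emptyset}=1$, $e^{\sqcup\!\sqcup\tilde x_i\tilde\eta}=e_i\sqcup\!\sqcup e^{\sqcup\!\sqcup\tilde\eta}$. Multiplicative mixed composition of $c\in\mathbb{R}^q\langle\langle X\rangle\rangle$ and $g\in\mathbb{R}^m\langle\langle X\rangle\rangle$: $c\,\tilde\circ\,\delta_g=\sum_{\eta\in X^\ast}(c,\eta)\bar\phi_g(\eta)(\mathbf 1)$, $\mathbf 1=1\emptyset$, $\bar\phi_g(x_0)(w)=x_0w$, $\bar\phi_g(x_i)(w)=x_i(g_i\sqcup\!\sqcup w)$ ($i\ge1$), extended multiplicatively (concatenation to composition). For purely improper $g\in\mathbb{R}^m\langle\langle X\rangle\rangle$, $g^{\circ-1}$ is the unique $h\in\mathbb{R}^m\langle\langle X\rangle\rangle$ with $h=g^{\sqcup\!\sqcup-1}\,\tilde\circ\,\delta_h$. *)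

theory Defs
  imports Complex_Main
begin

(* Noncommutative letters x_0..x_m are the naturals 0..m; words are nat lists.
   A series in R^l<<X>> is  c :: nat => nat list => real, c i w = coefficient of
   word w in component i (components indexed 1..l), zero outside the carrier.
   Commuting letters ~x_1..~x_q; monomials are exponent vectors  nat => nat
   supported in {1..q}.  A series in R^m[[~X]] is d :: nat => (nat => nat) => real. *)

type_synonym ncs = "nat list \<Rightarrow> real"
type_synonym vncs = "nat \<Rightarrow> nat list \<Rightarrow> real"
type_synonym cs = "(nat \<Rightarrow> nat) \<Rightarrow> real"
type_synonym vcs = "nat \<Rightarrow> (nat \<Rightarrow> nat) \<Rightarrow> real"

definition series :: "nat \<Rightarrow> nat \<Rightarrow> vncs set" where
  "series l m = {c. \<forall>i w. (i \<notin> {1..l} \<or> \<not> set w \<subseteq> {0..m}) \<longrightarrow> c i w = 0}"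

definition proper_series :: "nat \<Rightarrow> nat \<Rightarrow> vncs set" where
  "proper_series l m = {c \<in> series l m. \<forall>i. c i [] = 0}"

definition one_s :: ncs where
  "one_s w = (if w = [] then 1 else 0)"

definition shuffle :: "ncs \<Rightarrow> ncs \<Rightarrow> ncs" where
  "shuffle a b w = (\<Sum>S\<in>Pow {..<length w}. a (nths w S) * b (nths w (- S)))"

definition shinv_s :: "ncs \<Rightarrow> ncs" where
  "shinv_s a = (THE b. shuffle a b = one_s)"

definition shinv :: "nat \<Rightarrow> vncs \<Rightarrow> vncs" where
  "shinv l g i = (if i \<in> {1..l} then shinv_s (g i) else (\<lambda>_. 0))"

definition prepend :: "nat \<Rightarrow> ncs \<Rightarrow> ncs" where
  "prepend i s w = (case w of [] \<Rightarrow> 0 | j # w' \<Rightarrow> if j = i then s w' else 0)"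

(* phi_g(eta)(1) *)
fun phi :: "vncs \<Rightarrow> nat list \<Rightarrow> ncs" where
  "phi g [] = one_s"
| "phi g (i # eta) = (if i = 0 then prepend 0 (phi g eta)
                     else prepend i (shuffle (g i) (phi g eta)))"

(* multiplicative mixed composition  c ~o delta_g,  c in R^l<<X>>, X = {x_0..x_m}.
   phi g eta (1) only has support on words of length >= length eta, so the
   coefficient of w is a finite sum over words eta with length eta <= length w. *)
definition mixcomp :: "nat \<Rightarrow> nat \<Rightarrow> vncs \<Rightarrow> vncs \<Rightarrow> vncs" where
  "mixcomp l m c g j w =
     (if j \<in> {1..l} \<and> set w \<subseteq> {0..m}
      then (\<Sum>eta\<in>{eta. set eta \<subseteq> {0..m} \<and> length eta \<le> length w}. c j eta * phi g eta w)
      else 0)"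

definition compinv :: "nat \<Rightarrow> vncs \<Rightarrow> vncs" where
  "compinv m g = (THE h. h = mixcomp m m (shinv m g) h)"

definition mons :: "nat \<Rightarrow> (nat \<Rightarrow> nat) set" where
  "mons q = {alpha. \<forall>j. j \<notin> {1..q} \<longrightarrow> alpha j = 0}"

definition cseries :: "nat \<Rightarrow> nat \<Rightarrow> vcs set" where
  "cseries m q = {d. \<forall>i alpha. (i \<notin> {1..m} \<or> alpha \<notin> mons q) \<longrightarrow> d i alpha = 0}"

definition cprod :: "cs \<Rightarrow> cs \<Rightarrow> cs" where
  "cprod a b alpha = (\<Sum>beta\<in>{beta. \<forall>j. beta j \<le> alpha j}. a beta * b (\<lambda>j. alpha j - beta j))"

definition cinv_s :: "nat \<Rightarrow> cs \<Rightarrow> cs" where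
  "cinv_s q a = (THE b. (\<forall>alpha. alpha \<notin> mons q \<longrightarrow> b alpha = 0) \<and>
       (\<forall>alpha\<in>mons q. cprod a b alpha = (if alpha = (\<lambda>_. 0) then 1 else 0)))"

definition cinv :: "nat \<Rightarrow> nat \<Rightarrow> vcs \<Rightarrow> vcs" where
  "cinv m q d i = (if i \<in> {1..m} then cinv_s q (d i) else (\<lambda>_. 0))"

fun shpow :: "ncs \<Rightarrow> nat \<Rightarrow> ncs" where
  "shpow s 0 = one_s"
| "shpow s (Suc n) = shuffle s (shpow s n)"

fun shmon :: "vncs \<Rightarrow> (nat \<Rightarrow> nat) \<Rightarrow> nat list \<Rightarrow> ncs" where
  "shmon e alpha [] = one_s"
| "shmon e alpha (j # js) = shuffle (shpow (e j) (alpha j)) (shmon e alpha js)"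

(* For proper e, e^{sh alpha} has support on words of length >= |alpha|, so the
   coefficient of w is a finite sum over monomials of total degree <= length w. *)
definition wfcomp :: "nat \<Rightarrow> nat \<Rightarrow> vcs \<Rightarrow> vncs \<Rightarrow> vncs" where
  "wfcomp m q d e i w =
     (if i \<in> {1..m} \<and> set w \<subseteq> {0..m}
      then (\<Sum>alpha\<in>{alpha\<in>mons q. (\<Sum>j\<in>{1..q}. alpha j) \<le> length w}.
              d i alpha * shmon e alpha [1..<q+1] w)
      else 0)"

end

theory Submission
  imports Defs
begin


definition D :: "nat \<Rightarrow> ncs \<Rightarrow> ncs" where "D k a = (\<lambda>w. a (k # w))"

lemma Pow_Suc_split:
  "(\<Sum>S\<in>Pow {..<Suc n}. F S) = (\<Sum>T\<in>Pow {..<n}. F (Suc ` T)) + (\<Sum>T\<in>Pow {..<n}. F (insert 0 (Suc ` T)))"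
proof -
  have e: "{..<Suc n} = insert 0 (Suc ` {..<n})" by (rule lessThan_Suc_eq_insert_0)
  have p: "Pow (Suc ` {..<n}) = image Suc ` Pow {..<n}" using image_Pow_surj[of Suc "{..<n}" "Suc ` {..<n}"] by simp
  have "Pow {..<Suc n} = Pow (Suc ` {..<n}) \<union> insert 0 ` Pow (Suc ` {..<n})"
    unfolding e by (rule Pow_insert)
  hence "(\<Sum>S\<in>Pow {..<Suc n}. F S) = (\<Sum>S\<in>Pow (Suc ` {..<n}). F S) + (\<Sum>S\<in>insert 0 ` Pow (Suc ` {..<n}). F S)"
    by (simp add: sum.union_disjoint) (subst sum.union_disjoint; auto)
  also have "(\<Sum>S\<in>insert 0 ` Pow (Suc ` {..<n}). F S) = (\<Sum>S\<in>Pow (Suc ` {..<n}). F (insert 0 S))"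
  proof (subst sum.reindex)
    show "inj_on (insert 0) (Pow (Suc ` {..<n}))"
      unfolding inj_on_def by (metis Pow_iff image_iff insert_ident nat.distinct(1) subsetD)
  qed simp
  also have "(\<Sum>S\<in>Pow (Suc ` {..<n}). F S) = (\<Sum>T\<in>Pow {..<n}. F (Suc ` T))"
    unfolding p by (rule sum.reindex[unfolded comp_def]) (rule inj_on_image_Pow, simp)
  also have "(\<Sum>S\<in>Pow (Suc ` {..<n}). F (insert 0 S)) = (\<Sum>T\<in>Pow {..<n}. F (insert 0 (Suc ` T)))"
    unfolding p by (rule sum.reindex[unfolded comp_def]) (rule inj_on_image_Pow, simp)
  finally show ?thesis .
qed

lemma nths_Cons_Suc: "nths (k # w) (Suc ` T) = nths w T"
  by (simp add: nths_Cons image_iff; rule arg_cong[where f="nths w"]; auto)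
lemma nths_Cons_ins: "nths (k # w) (insert 0 (Suc ` T)) = k # nths w T"
  by (simp add: nths_Cons image_iff; rule arg_cong[where f="nths w"]; auto)
lemma nths_Cons_negSuc: "nths (k # w) (- (Suc ` T)) = k # nths w (- T)"
  by (simp add: nths_Cons image_iff; rule arg_cong[where f="nths w"]; auto)
lemma nths_Cons_negins: "nths (k # w) (- insert 0 (Suc ` T)) = nths w (- T)"
  by (simp add: nths_Cons image_iff; rule arg_cong[where f="nths w"]; auto)

lemma sh_nil: "shuffle a b [] = a [] * b []"
  by (simp add: shuffle_def)

lemma sh_cons: "shuffle a b (k # w) = shuffle (D k a) b w + shuffle a (D k b) w"
  unfolding shuffle_def D_def
  by (simp add: Pow_Suc_split nths_Cons_Suc nths_Cons_ins nths_Cons_negSuc nths_Cons_negins add.commute)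

lemma sh_add_left: "shuffle (\<lambda>v. a v + b v) c w = shuffle a c w + shuffle b c w"
  unfolding shuffle_def by (simp add: sum.distrib distrib_right)
lemma sh_add_right: "shuffle c (\<lambda>v. a v + b v) w = shuffle c a w + shuffle c b w"
  unfolding shuffle_def by (simp add: sum.distrib distrib_left)
lemma sh_scale_left: "shuffle (\<lambda>v. r * a v) b w = r * shuffle a b w"
  unfolding shuffle_def by (simp add: sum_distrib_left mult.assoc)
lemma sh_scale_right: "shuffle a (\<lambda>v. r * b v) w = r * shuffle a b w"
  unfolding shuffle_def by (simp add: sum_distrib_left mult.left_commute)
lemma sh_sum_left: "shuffle (\<lambda>v. \<Sum>x\<in>X. f x v) b w = (\<Sum>x\<in>X. shuffle (f x) b w)"
  unfolding shuffle_def by (simp add: sum_distrib_right sum.swap[of _ X])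
lemma sh_sum_right: "shuffle a (\<lambda>v. \<Sum>x\<in>X. f x v) w = (\<Sum>x\<in>X. shuffle a (f x) w)"
  unfolding shuffle_def by (simp add: sum_distrib_left sum.swap[of _ X])
lemma sh_zero_left: "shuffle (\<lambda>v. 0) b w = 0"
  unfolding shuffle_def by simp
lemma sh_zero_right: "shuffle a (\<lambda>v. 0) w = 0"
  unfolding shuffle_def by simp

lemma D_one: "D k one_s = (\<lambda>v. 0)"
  by (simp add: D_def one_s_def)

lemma sh_one_left: "shuffle one_s b = b"
proof
  fix w show "shuffle one_s b w = b w"
  proof (induction w arbitrary: b)
    case Nil then show ?case by (simp add: sh_nil one_s_def)
  next
    case (Cons k w) then show ?case by (simp add: sh_cons D_one sh_zero_left) (simp add: D_def)
  qed
qed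

lemma sh_comm: "shuffle a b = shuffle b a"
proof
  fix w show "shuffle a b w = shuffle b a w"
  proof (induction w arbitrary: a b)
    case Nil then show ?case by (simp add: sh_nil)
  next
    case (Cons k w) then show ?case by (simp add: sh_cons)
  qed
qed

lemma sh_one_right: "shuffle b one_s = b"
  by (metis sh_comm sh_one_left)

lemma D_sh: "D k (shuffle a b) = (\<lambda>w. shuffle (D k a) b w + shuffle a (D k b) w)"
  by (simp add: D_def sh_cons)

lemma sh_assoc: "shuffle (shuffle a b) c = shuffle a (shuffle b c)"
proof
  fix w show "shuffle (shuffle a b) c w = shuffle a (shuffle b c) w"
  proof (induction w arbitrary: a b c)
    case Nil then show ?case by (simp add: sh_nil)
  next
    case (Cons k w) then show ?case by (simp add: sh_cons D_sh sh_add_left sh_add_right)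
  qed
qed

lemma sh_lcomm: "shuffle a (shuffle b c) = shuffle b (shuffle a c)"
  by (metis sh_assoc sh_comm)

lemma nths_len_split: "length (nths w S) + length (nths w (- S)) = length w"
proof (induction w arbitrary: S)
  case Nil then show ?case by simp
next
  case (Cons k w)
  have e: "{j. Suc j \<in> - S} = - {j. Suc j \<in> S}" by auto
  show ?case using Cons[of "{j. Suc j \<in> S}"] by (simp add: nths_Cons Compl_eq)
qed

lemma nths_set_split: "set w \<subseteq> set (nths w S) \<union> set (nths w (- S))"
proof (induction w arbitrary: S)
  case Nil then show ?case by simp
next
  case (Cons k w)
  have e: "{j. Suc j \<in> - S} = - {j. Suc j \<in> S}" by auto
  show ?case using Cons[of "{j. Suc j \<in> S}"] by (auto simp add: nths_Cons Compl_eq)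
qed

lemma nths_len_le: "length (nths w S) \<le> length w"
  using nths_len_split[of w S] by linarith

definition subw :: "nat list \<Rightarrow> nat list \<Rightarrow> bool" where
  "subw v w \<longleftrightarrow> set v \<subseteq> set w \<and> length v \<le> length w"

lemma subw_nths: "subw (nths w S) w"
  by (simp add: subw_def nths_len_le set_nths_subset)

lemma subw_refl: "subw w w" by (simp add: subw_def)
lemma subw_trans: "subw u v \<Longrightarrow> subw v w \<Longrightarrow> subw u w" by (auto simp: subw_def)

lemma sh_cong:
  assumes "\<And>v. subw v w \<Longrightarrow> a v = a' v" "\<And>v. subw v w \<Longrightarrow> b v = b' v"
  shows "shuffle a b w = shuffle a' b' w"
  unfolding shuffle_def by (rule sum.cong) (auto simp: assms subw_nths)

lemma sh_nonzero_ex: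
  assumes "shuffle a b w \<noteq> 0"
  shows "\<exists>S. a (nths w S) \<noteq> 0 \<and> b (nths w (- S)) \<noteq> 0"
  using assms unfolding shuffle_def
  by (metis (no_types, lifting) mult_not_zero sum.neutral)

lemma sh_ord:
  assumes "\<And>v. a v \<noteq> 0 \<Longrightarrow> p \<le> length v" "\<And>v. b v \<noteq> 0 \<Longrightarrow> r \<le> length v"
    and "shuffle a b w \<noteq> 0"
  shows "p + r \<le> length w"
  using sh_nonzero_ex[OF assms(3)] assms(1,2) nths_len_split by (metis add_mono)

lemma sh_letters:
  assumes "\<And>v. a v \<noteq> 0 \<Longrightarrow> set v \<subseteq> B" "\<And>v. b v \<noteq> 0 \<Longrightarrow> set v \<subseteq> B"
    and "shuffle a b w \<noteq> 0"
  shows "set w \<subseteq> B"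
  using sh_nonzero_ex[OF assms(3)] assms(1,2) nths_set_split by (metis Un_least subset_trans)



lemma fp_unique_gen:
  fixes T :: "('i \<Rightarrow> 'a \<Rightarrow> 'b) \<Rightarrow> ('i \<Rightarrow> 'a \<Rightarrow> 'b)" and sz :: "'a \<Rightarrow> nat"
  assumes contr: "\<And>f f' i x. (\<And>j y. sz y < sz x \<Longrightarrow> f j y = f' j y) \<Longrightarrow> T f i x = T f' i x"
    and h: "h = T h" and h': "h' = T h'"
  shows "h = h'"
proof -
  have "\<forall>i x. sz x = n \<longrightarrow> h i x = h' i x" for n
  proof (induction n rule: less_induct)
    case (less n)
    show ?case
    proof (intro allI impI)
      fix i x assume "sz x = n"
      have "T h i x = T h' i x"
      proof (rule contr)
        fix j y assume "sz y < sz x"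
        then show "h j y = h' j y" using less \<open>sz x = n\<close> by blast
      qed
      then show "h i x = h' i x" using h h' by metis
    qed
  qed
  then show ?thesis by blast
qed

lemma fp_exists_gen:
  fixes T :: "('i \<Rightarrow> 'a \<Rightarrow> 'b) \<Rightarrow> ('i \<Rightarrow> 'a \<Rightarrow> 'b)" and sz :: "'a \<Rightarrow> nat"
  assumes contr: "\<And>f f' i x. (\<And>j y. sz y < sz x \<Longrightarrow> f j y = f' j y) \<Longrightarrow> T f i x = T f' i x"
  shows "\<exists>h. h = T h"
proof -
  define F where "F n = (T ^^ n) (\<lambda>_ _. undefined)" for n
  have FS: "F (Suc n) = T (F n)" for n by (simp add: F_def)
  have P: "\<forall>k i x. n \<le> k \<longrightarrow> sz x < n \<longrightarrow> F k i x = F n i x" for n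
  proof (induction n)
    case 0 then show ?case by simp
  next
    case (Suc n)
    show ?case
    proof (intro allI impI)
      fix k i x assume k: "Suc n \<le> k" and x: "sz x < Suc n"
      then obtain k' where k': "k = Suc k'" "n \<le> k'" by (metis Suc_le_D Suc_le_mono)
      have "T (F k') i x = T (F n) i x"
      proof (rule contr)
        fix j y assume "sz y < sz x"
        then have "sz y < n" using x by linarith
        then show "F k' j y = F n j y" using Suc k'(2) by blast
      qed
      then show "F k i x = F (Suc n) i x" by (simp add: FS k')
    qed
  qed
  define h where "h i x = F (Suc (sz x)) i x" for i x
  have "h = T h"
  proof (intro ext)
    fix i x
    have "T (F (sz x)) i x = T h i x"
    proof (rule contr)
      fix j y assume "sz y < sz x"
      then have "Suc (sz y) \<le> sz x" by simp
      then show "F (sz x) j y = h j y" using P[of "Suc (sz y)"] unfolding h_def by blast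
    qed
    moreover have "h i x = T (F (sz x)) i x" by (simp only: h_def FS)
    ultimately show "h i x = T h i x" by simp
  qed
  then show ?thesis by blast
qed

lemma fp_unique1:
  fixes T :: "('a \<Rightarrow> 'b) \<Rightarrow> ('a \<Rightarrow> 'b)" and sz :: "'a \<Rightarrow> nat"
  assumes contr: "\<And>f f' x. (\<And>y. sz y < sz x \<Longrightarrow> f y = f' y) \<Longrightarrow> T f x = T f' x"
    and h: "h = T h" and h': "h' = T h'"
  shows "h = h'"
proof -
  have "(\<lambda>_::unit. h) = (\<lambda>_. h')"
  proof (rule fp_unique_gen[where T="\<lambda>F i. T (F ())" and sz=sz])
    fix f f' :: "unit \<Rightarrow> 'a \<Rightarrow> 'b" and i x
    assume "\<And>j y. sz y < sz x \<Longrightarrow> f j y = f' j y"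
    then show "T (f ()) x = T (f' ()) x" by (intro contr) blast
  qed (use h h' in auto)
  then show ?thesis by metis
qed

lemma fp_exists1:
  fixes T :: "('a \<Rightarrow> 'b) \<Rightarrow> ('a \<Rightarrow> 'b)" and sz :: "'a \<Rightarrow> nat"
  assumes contr: "\<And>f f' x. (\<And>y. sz y < sz x \<Longrightarrow> f y = f' y) \<Longrightarrow> T f x = T f' x"
  shows "\<exists>h. h = T h"
proof -
  obtain H :: "unit \<Rightarrow> 'a \<Rightarrow> 'b" where "H = (\<lambda>i. T (H ()))"
  proof -
    have "\<exists>H. H = (\<lambda>(i::unit). T (H ()))"
    proof (rule fp_exists_gen[where T="\<lambda>F i. T (F ())" and sz=sz])
      fix f f' :: "unit \<Rightarrow> 'a \<Rightarrow> 'b" and i x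
      assume "\<And>j y. sz y < sz x \<Longrightarrow> f j y = f' j y"
      then show "T (f ()) x = T (f' ()) x" by (intro contr) blast
    qed
    then show ?thesis using that by blast
  qed
  then have "H () = T (H ())" by metis
  then show ?thesis by blast
qed



definition G :: "vncs \<Rightarrow> nat \<Rightarrow> ncs" where "G g i = (if i = 0 then one_s else g i)"

lemma prepend_Nil[simp]: "prepend i s [] = 0" by (simp add: prepend_def)
lemma prepend_Cons[simp]: "prepend i s (k # w) = (if k = i then s w else 0)" by (simp add: prepend_def)

lemma phi_Cons': "phi g (i # eta) = prepend i (shuffle (G g i) (phi g eta))"
  by (cases "i = 0") (simp_all add: G_def sh_one_left)

declare phi.simps(2)[simp del]

lemma phi_Cons_Nil[simp]: "phi g (i # eta) [] = 0"
  by (simp add: phi_Cons')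
lemma phi_Cons_Cons: "phi g (i # eta) (k # w) = (if k = i then shuffle (G g i) (phi g eta) w else 0)"
  by (simp add: phi_Cons')

lemma phi_supp: "phi g eta w \<noteq> 0 \<Longrightarrow> subw eta w"
proof (induction eta arbitrary: w)
  case Nil then show ?case by (simp add: subw_def)
next
  case (Cons i eta)
  then obtain w' where w: "w = i # w'" and s: "shuffle (G g i) (phi g eta) w' \<noteq> 0"
    by (cases w) (auto simp: phi_Cons_Cons split: if_splits)
  obtain S where "phi g eta (nths w' (- S)) \<noteq> 0" using sh_nonzero_ex[OF s] by blast
  then have "subw eta (nths w' (- S))" using Cons.IH by blast
  then have "subw eta w'" using subw_nths subw_trans by blast
  then show ?case by (auto simp: subw_def w)
qed

definition L :: "nat set \<Rightarrow> nat \<Rightarrow> nat list set" where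
  "L A n = {eta. set eta \<subseteq> A \<and> length eta \<le> n}"

lemma finite_L: "finite A \<Longrightarrow> finite (L A n)"
  unfolding L_def by (rule finite_lists_length_le)

definition MC :: "vncs \<Rightarrow> ncs \<Rightarrow> ncs" where
  "MC g a w = (\<Sum>eta\<in>L (set w) (length w). a eta * phi g eta w)"

lemma MC_super:
  assumes "finite A" "set w \<subseteq> A" "length w \<le> n"
  shows "MC g a w = (\<Sum>eta\<in>L A n. a eta * phi g eta w)"
  unfolding MC_def
proof (rule sum.mono_neutral_left)
  show "finite (L A n)" using assms by (simp add: finite_L)
  show "L (set w) (length w) \<subseteq> L A n" using assms by (auto simp: L_def)
  show "\<forall>i\<in>L A n - L (set w) (length w). a i * phi g i w = 0"
    using phi_supp by (force simp: L_def subw_def)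
qed

lemma MC_add: "MC g (\<lambda>v. a v + b v) w = MC g a w + MC g b w"
  unfolding MC_def by (simp add: distrib_right sum.distrib)
lemma MC_add_fun: "MC g (\<lambda>v. a v + b v) = (\<lambda>w. MC g a w + MC g b w)"
  by (rule ext) (rule MC_add)
lemma MC_scale: "MC g (\<lambda>v. r * a v) w = r * MC g a w"
  unfolding MC_def by (simp add: sum_distrib_left mult.assoc)
lemma MC_sum: "MC g (\<lambda>v. \<Sum>x\<in>X. f x v) w = (\<Sum>x\<in>X. MC g (f x) w)"
  unfolding MC_def by (simp add: sum_distrib_right sum.swap[of _ X])

lemma MC_one: "MC g one_s = one_s"
proof
  fix w
  have "MC g one_s w = (\<Sum>eta\<in>L (set w) (length w). if eta = [] then phi g [] w else 0)"
    unfolding MC_def by (rule sum.cong) (auto simp: one_s_def)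
  also have "\<dots> = phi g [] w" by (subst sum.delta) (auto simp: finite_lists_length_le L_def)
  finally show "MC g one_s w = one_s w" by simp
qed

lemma MC_nil: "MC g a [] = a []"
proof -
  have "L {} 0 = {[]}" by (auto simp: L_def)
  then show ?thesis by (simp add: MC_def one_s_def)
qed

lemma MC_cons: "MC g a (k # w) = shuffle (G g k) (MC g (D k a)) w"
proof -
  define A where "A = insert k (set w)"
  define n where "n = length w"
  have fA: "finite A" by (simp add: A_def)
  have "MC g a (k # w) = (\<Sum>eta\<in>L A (Suc n). a eta * phi g eta (k # w))"
    by (simp add: MC_def A_def n_def)
  also have "\<dots> = (\<Sum>eta\<in>Cons k ` L A n. a eta * phi g eta (k # w))"
  proof (rule sum.mono_neutral_right)
    show "finite (L A (Suc n))" using fA by (simp add: finite_L)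
    show "Cons k ` L A n \<subseteq> L A (Suc n)" by (auto simp: L_def A_def)
    show "\<forall>i\<in>L A (Suc n) - Cons k ` L A n. a i * phi g i (k # w) = 0"
    proof
      fix eta assume e: "eta \<in> L A (Suc n) - Cons k ` L A n"
      show "a eta * phi g eta (k # w) = 0"
      proof (cases eta)
        case Nil then show ?thesis by (simp add: one_s_def)
      next
        case (Cons i e')
        then have "i \<noteq> k" using e by (auto simp: L_def A_def)
        then show ?thesis by (simp add: Cons phi_Cons_Cons)
      qed
    qed
  qed
  also have "\<dots> = (\<Sum>e\<in>L A n. a (k # e) * phi g (k # e) (k # w))"
    by (subst sum.reindex) (auto simp: inj_on_def)
  also have "\<dots> = (\<Sum>e\<in>L A n. shuffle (G g k) (\<lambda>v. a (k # e) * phi g e v) w)"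
    by (simp add: phi_Cons_Cons sh_scale_right)
  also have "\<dots> = shuffle (G g k) (\<lambda>v. \<Sum>e\<in>L A n. a (k # e) * phi g e v) w"
    by (simp add: sh_sum_right)
  also have "\<dots> = shuffle (G g k) (MC g (D k a)) w"
  proof (rule sh_cong)
    fix v assume "subw v w"
    then have "set v \<subseteq> A" "length v \<le> n" by (auto simp: subw_def A_def n_def)
    then show "(\<Sum>e\<in>L A n. a (k # e) * phi g e v) = MC g (D k a) v"
      using MC_super[OF fA, of v n g "D k a"] by (simp add: D_def)
  qed simp
  finally show ?thesis .
qed

lemma D_MC: "D k (MC g a) = shuffle (G g k) (MC g (D k a))"
  by (simp add: D_def MC_cons)

lemma MC_sh: "MC g (shuffle a b) = shuffle (MC g a) (MC g b)"
proof -
  have "\<forall>a b (w::nat list). length w \<le> n \<longrightarrow> MC g (shuffle a b) w = shuffle (MC g a) (MC g b) w" for n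
  proof (induction n)
    case 0 then show ?case by (simp add: MC_nil sh_nil)
  next
    case (Suc n)
    show ?case
    proof (intro allI impI)
      fix a b and w :: "nat list" assume lw: "length w \<le> Suc n"
      show "MC g (shuffle a b) w = shuffle (MC g a) (MC g b) w"
      proof (cases w)
        case Nil then show ?thesis by (simp add: MC_nil sh_nil)
      next
        case (Cons k w')
        then have lw': "length w' \<le> n" using lw by simp
        have "MC g (shuffle a b) w = shuffle (G g k) (\<lambda>v. MC g (shuffle (D k a) b) v + MC g (shuffle a (D k b)) v) w'"
          by (simp add: Cons MC_cons D_sh MC_add_fun)
        also have "\<dots> = shuffle (G g k) (\<lambda>v. shuffle (MC g (D k a)) (MC g b) v + shuffle (MC g a) (MC g (D k b)) v) w'"
        proof (rule sh_cong)
          fix v assume "subw v w'"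
          then have "length v \<le> n" using lw' by (simp add: subw_def)
          then show "MC g (shuffle (D k a) b) v + MC g (shuffle a (D k b)) v =
                shuffle (MC g (D k a)) (MC g b) v + shuffle (MC g a) (MC g (D k b)) v"
            using Suc.IH by simp
        qed simp
        also have "\<dots> = shuffle (MC g a) (MC g b) w"
          by (simp add: Cons sh_cons D_MC sh_add_right sh_assoc sh_lcomm[of "MC g a"])
        finally show ?thesis .
      qed
    qed
  qed
  then show ?thesis by blast
qed



declare upt_Suc[simp del]

lemma MC_shpow: "MC g (shpow s n) = shpow (MC g s) n"
  by (induction n) (simp_all add: MC_one MC_sh)

lemma MC_shmon: "MC g (shmon e alpha js) = shmon (\<lambda>j. MC g (e j)) alpha js"
  by (induction js) (simp_all add: MC_one MC_sh MC_shpow)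

lemma shpow_cong: "(\<And>v. subw v w \<Longrightarrow> s v = s' v) \<Longrightarrow> shpow s n w = shpow s' n w"
proof (induction n arbitrary: w)
  case 0 then show ?case by simp
next
  case (Suc n)
  show ?case unfolding shpow.simps
  proof (rule sh_cong)
    fix v assume v: "subw v w"
    show "s v = s' v" using Suc.prems v .
    show "shpow s n v = shpow s' n v"
      using Suc.IH Suc.prems subw_trans v by blast
  qed
qed

lemma shmon_cong:
  "(\<And>j v. j \<in> set js \<Longrightarrow> subw v w \<Longrightarrow> e j v = e' j v) \<Longrightarrow> shmon e alpha js w = shmon e' alpha js w"
proof (induction js arbitrary: w)
  case Nil then show ?case by simp
next
  case (Cons j js)
  show ?case unfolding shmon.simps
  proof (rule sh_cong)
    fix v assume v: "subw v w"
    show "shpow (e j) (alpha j) v = shpow (e' j) (alpha j) v"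
      by (rule shpow_cong) (use Cons.prems v subw_trans in auto)
    show "shmon e alpha js v = shmon e' alpha js v"
      by (rule Cons.IH) (use Cons.prems v subw_trans in auto)
  qed
qed

lemma shpow_add: "shuffle (shpow s n) (shpow s k) = shpow s (n + k)"
  by (induction n) (simp_all add: sh_one_left sh_assoc)

lemma sh_swap: "shuffle (shuffle a b) (shuffle c e) = shuffle (shuffle a c) (shuffle b e)"
  by (metis sh_assoc sh_lcomm)

lemma shmon_add: "shuffle (shmon e alpha js) (shmon e beta js) = shmon e (\<lambda>j. alpha j + beta j) js"
proof (induction js)
  case Nil then show ?case by (simp add: sh_one_left)
next
  case (Cons j js) then show ?case by (simp only: shmon.simps) (subst sh_swap, simp add: shpow_add)
qed

lemma shpow_ord: "s [] = 0 \<Longrightarrow> shpow s n v \<noteq> 0 \<Longrightarrow> n \<le> length v"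
proof (induction n arbitrary: v)
  case 0 then show ?case by simp
next
  case (Suc n)
  have "1 + n \<le> length v"
  proof (rule sh_ord[of s _ "shpow s n"])
    fix u assume "s u \<noteq> 0" then show "1 \<le> length u" using Suc.prems by (cases u) auto
  next
    fix u assume "shpow s n u \<noteq> 0" then show "n \<le> length u" using Suc by blast
  next
    show "shuffle s (shpow s n) v \<noteq> 0" using Suc.prems by simp
  qed
  then show ?case by simp
qed

lemma shmon_ord:
  "(\<forall>j\<in>set js. e j [] = 0) \<Longrightarrow> shmon e alpha js v \<noteq> 0 \<Longrightarrow> sum_list (map alpha js) \<le> length v"
proof (induction js arbitrary: v)
  case Nil then show ?case by simp
next
  case (Cons j js)
  have "alpha j + sum_list (map alpha js) \<le> length v"
  proof (rule sh_ord[of "shpow (e j) (alpha j)" _ "shmon e alpha js"])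
    fix u assume "shpow (e j) (alpha j) u \<noteq> 0" then show "alpha j \<le> length u"
      using shpow_ord[of "e j" "alpha j" u] Cons.prems(1) by simp
  next
    fix u assume "shmon e alpha js u \<noteq> 0" then show "sum_list (map alpha js) \<le> length u"
      using Cons by simp
  next
    show "shuffle (shpow (e j) (alpha j)) (shmon e alpha js) v \<noteq> 0" using Cons.prems by simp
  qed
  then show ?case by simp
qed

definition deg :: "nat \<Rightarrow> (nat \<Rightarrow> nat) \<Rightarrow> nat" where
  "deg q alpha = (\<Sum>j\<in>{1..q}. alpha j)"

lemma sum_list_upt_deg: "sum_list (map alpha [1..<q+1]) = deg q alpha"
  unfolding deg_def by (metis atLeastLessThanSuc_atLeastAtMost set_upt sum_set_upt_conv_sum_list_nat Suc_eq_plus1)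

lemma SM_ord:
  "(\<forall>j\<in>{1..q}. e j [] = 0) \<Longrightarrow> shmon e alpha [1..<q+1] v \<noteq> 0 \<Longrightarrow> deg q alpha \<le> length v"
proof -
  assume a: "\<forall>j\<in>{1..q}. e j [] = 0" "shmon e alpha [1..<q+1] v \<noteq> 0"
  have "sum_list (map alpha [1..<q+1]) \<le> length v"
    by (rule shmon_ord) (use a in auto)
  then show ?thesis by (simp only: sum_list_upt_deg)
qed

definition Aset :: "nat \<Rightarrow> nat \<Rightarrow> (nat \<Rightarrow> nat) set" where
  "Aset q N = {alpha \<in> mons q. (\<Sum>j\<in>{1..q}. alpha j) \<le> N}"

lemma finite_Aset: "finite (Aset q N)"
proof -
  have "Aset q N \<subseteq> {f. \<forall>x. (x \<in> {1..q} \<longrightarrow> f x \<in> {0..N}) \<and> (x \<notin> {1..q} \<longrightarrow> f x = 0)}"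
  proof (clarsimp simp: Aset_def mons_def)
    fix f x assume "(\<Sum>j = Suc 0..q. f j) \<le> N" "Suc 0 \<le> x" "x \<le> q"
    then show "f x \<le> N" using member_le_sum[of x "{1..q}" f] by auto
  qed
  then show ?thesis by (rule finite_subset) (rule finite_set_of_finite_funs; simp)
qed

lemma wf_uniform:
  assumes e0: "\<forall>j\<in>{1..q}. e j [] = 0" and i: "i \<in> {1..m}" and v: "set v \<subseteq> {0..m}" "length v \<le> N"
  shows "wfcomp m q dd e i v = (\<Sum>alpha\<in>Aset q N. dd i alpha * shmon e alpha [1..<q+1] v)"
proof -
  have "wfcomp m q dd e i v = (\<Sum>alpha\<in>Aset q (length v). dd i alpha * shmon e alpha [1..<q+1] v)"
    using i v by (simp add: wfcomp_def Aset_def)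
  also have "\<dots> = (\<Sum>alpha\<in>Aset q N. dd i alpha * shmon e alpha [1..<q+1] v)"
  proof (rule sum.mono_neutral_left)
    show "finite (Aset q N)" by (rule finite_Aset)
    show "Aset q (length v) \<subseteq> Aset q N"
      using v by (auto simp: Aset_def)
    show "\<forall>a\<in>Aset q N - Aset q (length v). dd i a * shmon e a [1..<q+1] v = 0"
      using SM_ord[of q e, OF e0] by (force simp: Aset_def deg_def)
  qed
  finally show ?thesis .
qed

lemma mixcomp_MC:
  assumes "j \<in> {1..l}" "set w \<subseteq> {0..m}"
  shows "mixcomp l m c g j w = MC g (c j) w"
  using assms MC_super[of "{0..m}" w "length w" g "c j"] by (simp add: mixcomp_def L_def)

lemma WM:
  assumes c0: "\<forall>j\<in>{1..q}. c j [] = 0"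
  shows "wfcomp m q dd (mixcomp q m c g) = mixcomp m m (wfcomp m q dd c) g"
proof (intro ext)
  fix i w
  show "wfcomp m q dd (mixcomp q m c g) i w = mixcomp m m (wfcomp m q dd c) g i w"
  proof (cases "i \<in> {1..m} \<and> set w \<subseteq> {0..m}")
    case False then show ?thesis by (auto simp: wfcomp_def mixcomp_def)
  next
    case True
    then have i: "i \<in> {1..m}" and w: "set w \<subseteq> {0..m}" by auto
    let ?js = "[1..<q+1]"
    have sm: "shmon (mixcomp q m c g) alpha ?js w = MC g (shmon c alpha ?js) w" for alpha
    proof -
      have "shmon (mixcomp q m c g) alpha ?js w = shmon (\<lambda>j. MC g (c j)) alpha ?js w"
      proof (rule shmon_cong)
        fix j v assume "j \<in> set ?js" "subw v w"
        then show "mixcomp q m c g j v = MC g (c j) v"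
          using w by (intro mixcomp_MC) (auto simp: subw_def)
      qed
      then show ?thesis by (simp add: MC_shmon)
    qed
    have "wfcomp m q dd (mixcomp q m c g) i w = (\<Sum>alpha\<in>Aset q (length w). dd i alpha * MC g (shmon c alpha ?js) w)"
      using True by (simp add: wfcomp_def Aset_def sm[simplified])
    also have "\<dots> = (\<Sum>alpha\<in>Aset q (length w). dd i alpha *
         (\<Sum>eta\<in>L {0..m} (length w). shmon c alpha ?js eta * phi g eta w))"
      using MC_super[of "{0..m}" w "length w" g] w by simp
    also have "\<dots> = (\<Sum>eta\<in>L {0..m} (length w).
         (\<Sum>alpha\<in>Aset q (length w). dd i alpha * shmon c alpha ?js eta) * phi g eta w)"
      by (simp add: sum_distrib_left sum_distrib_right sum.swap[of _ "Aset q (length w)"] mult.assoc)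
    also have "\<dots> = (\<Sum>eta\<in>L {0..m} (length w). wfcomp m q dd c i eta * phi g eta w)"
    proof (rule sum.cong)
      fix eta assume "eta \<in> L {0..m} (length w)"
      then show "(\<Sum>alpha\<in>Aset q (length w). dd i alpha * shmon c alpha ?js eta) * phi g eta w =
                 wfcomp m q dd c i eta * phi g eta w"
        using wf_uniform[of q c i m, OF c0 i, of eta "length w" dd] by (simp add: L_def)
    qed simp
    also have "\<dots> = mixcomp m m (wfcomp m q dd c) g i w"
      using True by (simp add: mixcomp_def L_def)
    finally show ?thesis .
  qed
qed



definition Le :: "(nat \<Rightarrow> nat) \<Rightarrow> (nat \<Rightarrow> nat) set" where
  "Le alpha = {beta. \<forall>j. beta j \<le> alpha j}"

abbreviation z0 :: "nat \<Rightarrow> nat" where "z0 \<equiv> (\<lambda>_. 0)"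

lemma deg_le: "j \<in> {1..q} \<Longrightarrow> alpha j \<le> deg q alpha"
  unfolding deg_def by (rule member_le_sum) auto

lemma Le_mons:
  assumes "alpha \<in> mons q" "beta \<in> Le alpha" shows "beta \<in> mons q"
  unfolding mons_def
proof (intro CollectI allI impI)
  fix j assume j: "j \<notin> {1..q}"
  then have "alpha j = 0" using assms(1) unfolding mons_def by blast
  moreover have "beta j \<le> alpha j" using assms(2) by (simp add: Le_def)
  ultimately show "beta j = 0" by simp
qed

lemma finite_Le: "alpha \<in> mons q \<Longrightarrow> finite (Le alpha)"
proof -
  assume a: "alpha \<in> mons q"
  have "Le alpha \<subseteq> {f. \<forall>x. (x \<in> {1..q} \<longrightarrow> f x \<in> {0..deg q alpha}) \<and> (x \<notin> {1..q} \<longrightarrow> f x = 0)}"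
  proof
    fix f assume f: "f \<in> Le alpha"
    then have fm: "f \<in> mons q" using a Le_mons by blast
    show "f \<in> {f. \<forall>x. (x \<in> {1..q} \<longrightarrow> f x \<in> {0..deg q alpha}) \<and> (x \<notin> {1..q} \<longrightarrow> f x = 0)}"
    proof (intro CollectI allI conjI impI)
      fix x assume "x \<in> {1..q}"
      then show "f x \<in> {0..deg q alpha}" using f deg_le[of x q alpha] by (auto simp: Le_def intro: le_trans)
    next
      fix x assume "x \<notin> {1..q}" then show "f x = 0" using fm unfolding mons_def by blast
    qed
  qed
  then show ?thesis by (rule finite_subset) (rule finite_set_of_finite_funs; simp)
qed

lemma z0_Le: "z0 \<in> Le alpha" by (simp add: Le_def)

lemma deg_diff: "beta \<in> Le alpha \<Longrightarrow> deg q (\<lambda>j. alpha j - beta j) = deg q alpha - deg q beta"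
  unfolding deg_def by (rule sum_subtractf_nat) (auto simp: Le_def)

lemma deg_mono: "beta \<in> Le alpha \<Longrightarrow> deg q beta \<le> deg q alpha"
  unfolding deg_def by (rule sum_mono) (auto simp: Le_def)

lemma deg_pos: "alpha \<in> mons q \<Longrightarrow> beta \<in> Le alpha \<Longrightarrow> beta \<noteq> z0 \<Longrightarrow> 0 < deg q beta"
proof -
  assume a: "alpha \<in> mons q" "beta \<in> Le alpha" "beta \<noteq> z0"
  have bm: "beta \<in> mons q" using a(1,2) by (rule Le_mons)
  obtain j where "beta j \<noteq> 0" using a(3) by auto
  then have "j \<in> {1..q}" using bm by (auto simp: mons_def)
  then show ?thesis using deg_le[of j q beta] \<open>beta j \<noteq> 0\<close> by linarith
qed

lemma deg_diff_less: "alpha \<in> mons q \<Longrightarrow> beta \<in> Le alpha \<Longrightarrow> beta \<noteq> z0 \<Longrightarrow>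
    deg q (\<lambda>j. alpha j - beta j) < deg q alpha"
  using deg_diff[of beta alpha q] deg_mono[of beta alpha q] deg_pos[of alpha q beta] by linarith

lemma cprod_Le: "cprod a b alpha = (\<Sum>beta\<in>Le alpha. a beta * b (\<lambda>j. alpha j - beta j))"
  by (simp add: cprod_def Le_def)

lemma cprod_split:
  assumes "alpha \<in> mons q"
  shows "cprod a b alpha = a z0 * b alpha + (\<Sum>beta\<in>Le alpha - {z0}. a beta * b (\<lambda>j. alpha j - beta j))"
  unfolding cprod_Le using sum.remove[OF finite_Le[OF assms] z0_Le, of "\<lambda>beta. a beta * b (\<lambda>j. alpha j - beta j)"]
  by simp

definition cinvT :: "nat \<Rightarrow> cs \<Rightarrow> cs \<Rightarrow> cs" where
  "cinvT q a b alpha = (if alpha \<in> mons q then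
     ((if alpha = z0 then 1 else 0) - (\<Sum>beta\<in>Le alpha - {z0}. a beta * b (\<lambda>j. alpha j - beta j))) / a z0
     else 0)"

lemma cinvT_contr:
  assumes "\<And>y. deg q y < deg q x \<Longrightarrow> f y = f' y"
  shows "cinvT q a f x = cinvT q a f' x"
proof (cases "x \<in> mons q")
  case True
  have "(\<Sum>beta\<in>Le x - {z0}. a beta * f (\<lambda>j. x j - beta j)) = (\<Sum>beta\<in>Le x - {z0}. a beta * f' (\<lambda>j. x j - beta j))"
    by (rule sum.cong) (use assms deg_diff_less[OF True] in auto)
  then show ?thesis by (simp add: cinvT_def)
qed (simp add: cinvT_def)

definition cinvP :: "nat \<Rightarrow> cs \<Rightarrow> cs \<Rightarrow> bool" where
  "cinvP q a b \<longleftrightarrow> (\<forall>alpha. alpha \<notin> mons q \<longrightarrow> b alpha = 0) \<and>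
       (\<forall>alpha\<in>mons q. cprod a b alpha = (if alpha = z0 then 1 else 0))"

lemma cinvP_iff: "a z0 \<noteq> 0 \<Longrightarrow> cinvP q a b \<longleftrightarrow> b = cinvT q a b"
proof
  assume a0: "a z0 \<noteq> 0" and P: "cinvP q a b"
  show "b = cinvT q a b"
  proof
    fix alpha show "b alpha = cinvT q a b alpha"
    proof (cases "alpha \<in> mons q")
      case True
      then have "a z0 * b alpha + (\<Sum>beta\<in>Le alpha - {z0}. a beta * b (\<lambda>j. alpha j - beta j)) = (if alpha = z0 then 1 else 0)"
        using P cprod_split[OF True, of a b] by (simp add: cinvP_def)
      then show ?thesis using True a0 by (simp add: cinvT_def field_simps)
    next
      case False then show ?thesis using P by (simp add: cinvP_def cinvT_def)
    qed
  qed
next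
  assume a0: "a z0 \<noteq> 0" and b: "b = cinvT q a b"
  show "cinvP q a b" unfolding cinvP_def
  proof (intro conjI allI ballI impI)
    fix alpha assume "alpha \<notin> mons q" then show "b alpha = 0" by (subst b) (simp add: cinvT_def)
  next
    fix alpha assume m: "alpha \<in> mons q"
    have "b alpha = cinvT q a b alpha" by (subst b) simp
    then show "cprod a b alpha = (if alpha = z0 then 1 else 0)"
      using m a0 cprod_split[OF m, of a b] by (simp add: cinvT_def field_simps)
  qed
qed

lemma cinv_s_prop:
  assumes a0: "a z0 \<noteq> 0"
  shows "cinvP q a (cinv_s q a)"
proof -
  have ex: "\<exists>b. b = cinvT q a b"
    by (rule fp_exists1[where sz="deg q"]) (rule cinvT_contr)
  have un: "b = b'" if "b = cinvT q a b" "b' = cinvT q a b'" for b b'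
    by (rule fp_unique1[where sz="deg q" and T="cinvT q a"]) (rule cinvT_contr, use that in auto)
  have "\<exists>!b. cinvP q a b" using ex un cinvP_iff[of a, OF a0] by metis
  then have "cinvP q a (THE b. cinvP q a b)" by (rule theI')
  then show ?thesis by (simp add: cinv_s_def cinvP_def)
qed



lemma deg_add: "deg q (\<lambda>j. alpha j + beta j) = deg q alpha + deg q beta"
  by (simp add: deg_def sum.distrib)

lemma Aset_deg: "alpha \<in> Aset q N \<longleftrightarrow> alpha \<in> mons q \<and> deg q alpha \<le> N"
  by (simp add: Aset_def deg_def)

lemma regroup:
  fixes f h K :: "(nat \<Rightarrow> nat) \<Rightarrow> real"
  assumes K0: "\<And>gam. gam \<in> mons q \<Longrightarrow> N < deg q gam \<Longrightarrow> K gam = 0"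
  shows "(\<Sum>alpha\<in>Aset q N. \<Sum>beta\<in>Aset q N. f alpha * h beta * K (\<lambda>j. alpha j + beta j))
       = (\<Sum>gam\<in>Aset q N. cprod h f gam * K gam)"
proof -
  let ?A = "Aset q N"
  define P where "P = {p \<in> ?A \<times> ?A. deg q (fst p) + deg q (snd p) \<le> N}"
  have fA: "finite ?A" by (rule finite_Aset)
  have "(\<Sum>alpha\<in>?A. \<Sum>beta\<in>?A. f alpha * h beta * K (\<lambda>j. alpha j + beta j))
      = (\<Sum>p\<in>?A \<times> ?A. f (fst p) * h (snd p) * K (\<lambda>j. fst p j + snd p j))"
    by (simp add: sum.cartesian_product case_prod_beta)
  also have "\<dots> = (\<Sum>p\<in>P. f (fst p) * h (snd p) * K (\<lambda>j. fst p j + snd p j))"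
  proof (rule sum.mono_neutral_right)
    show "finite (?A \<times> ?A)" using fA by simp
    show "P \<subseteq> ?A \<times> ?A" by (auto simp: P_def)
    show "\<forall>p\<in>?A \<times> ?A - P. f (fst p) * h (snd p) * K (\<lambda>j. fst p j + snd p j) = 0"
    proof
      fix p assume p: "p \<in> ?A \<times> ?A - P"
      then have "(\<lambda>j. fst p j + snd p j) \<in> mons q" by (auto simp: Aset_def mons_def)
      moreover have "N < deg q (\<lambda>j. fst p j + snd p j)" using p by (auto simp: P_def deg_add)
      ultimately show "f (fst p) * h (snd p) * K (\<lambda>j. fst p j + snd p j) = 0" using K0 by simp
    qed
  qed
  also have "\<dots> = (\<Sum>p\<in>(SIGMA gam:?A. Le gam). h (snd p) * f (\<lambda>j. fst p j - snd p j) * K (fst p))"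
  proof (rule sum.reindex_bij_witness[where j="\<lambda>p. ((\<lambda>j. fst p j + snd p j), snd p)"
                                      and i="\<lambda>p. ((\<lambda>j. fst p j - snd p j), snd p)"])
    fix p assume p: "p \<in> P"
    show "((\<lambda>j. fst ((\<lambda>j. fst p j + snd p j), snd p) j - snd ((\<lambda>j. fst p j + snd p j), snd p) j),
           snd ((\<lambda>j. fst p j + snd p j), snd p)) = p" by simp
    show "((\<lambda>j. fst p j + snd p j), snd p) \<in> (SIGMA gam:?A. Le gam)"
      using p by (auto simp: P_def Aset_deg deg_add Le_def mons_def)
    show "h (snd ((\<lambda>j. fst p j + snd p j), snd p)) *
          f (\<lambda>j. fst ((\<lambda>j. fst p j + snd p j), snd p) j - snd ((\<lambda>j. fst p j + snd p j), snd p) j) *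
          K (fst ((\<lambda>j. fst p j + snd p j), snd p)) = f (fst p) * h (snd p) * K (\<lambda>j. fst p j + snd p j)"
      by simp
  next
    fix p assume p: "p \<in> (SIGMA gam:?A. Le gam)"
    then have le: "\<forall>j. snd p j \<le> fst p j" and g: "fst p \<in> ?A" by (auto simp: Le_def)
    show "((\<lambda>j. fst ((\<lambda>j. fst p j - snd p j), snd p) j + snd ((\<lambda>j. fst p j - snd p j), snd p) j),
           snd ((\<lambda>j. fst p j - snd p j), snd p)) = p"
      using le by (simp add: prod_eq_iff)
    have sm: "snd p \<in> mons q" using g p Le_mons[of "fst p" q "snd p"] by (auto simp: Aset_def)
    have dm: "(\<lambda>j. fst p j - snd p j) \<in> mons q" using g by (auto simp: Aset_def mons_def)
    have "deg q (\<lambda>j. fst p j - snd p j) + deg q (snd p) = deg q (fst p)"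
      using deg_diff[of "snd p" "fst p" q] deg_mono[of "snd p" "fst p" q] p by auto
    then show "((\<lambda>j. fst p j - snd p j), snd p) \<in> P"
      using g sm dm by (auto simp: P_def Aset_deg)
  qed
  also have "\<dots> = (\<Sum>gam\<in>?A. \<Sum>beta\<in>Le gam. h beta * f (\<lambda>j. gam j - beta j) * K gam)"
  proof -
    have fL: "\<forall>x\<in>?A. finite (Le x)" using finite_Le by (auto simp: Aset_def)
    show ?thesis by (subst sum.Sigma[OF fA fL]) (simp add: case_prod_beta)
  qed
  also have "\<dots> = (\<Sum>gam\<in>?A. cprod h f gam * K gam)"
    by (simp add: cprod_Le sum_distrib_right)
  finally show ?thesis .
qed

lemma shmon_zero: "shmon e z0 js = one_s"
  by (induction js) (simp_all add: sh_one_left)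

lemma shinv_unique:
  assumes a0: "a [] \<noteq> 0" and b: "shuffle a b = one_s" and b': "shuffle a b' = one_s"
  shows "b = b'"
proof -
  define T where "T b w = (one_s w - (\<Sum>S\<in>Pow {..<length w} - {{}}. a (nths w S) * b (nths w (- S)))) / a []"
    for b :: ncs and w
  have split: "shuffle c d w = a [] * d w + (\<Sum>S\<in>Pow {..<length w} - {{}}. a (nths w S) * d (nths w (- S)))"
    if "c = a" for c d w
  proof -
    have "shuffle c d w = (\<Sum>S\<in>Pow {..<length w}. a (nths w S) * d (nths w (- S)))"
      using that by (simp add: shuffle_def)
    also have "\<dots> = a (nths w {}) * d (nths w (- {})) + (\<Sum>S\<in>Pow {..<length w} - {{}}. a (nths w S) * d (nths w (- S)))"
      by (rule sum.remove) auto
    also have "nths w (- {}) = w" by (simp add: nths_all)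
    finally show ?thesis by simp
  qed
  have fix1: "d = T d" if "shuffle a d = one_s" for d
  proof
    fix w
    have "one_s w = a [] * d w + (\<Sum>S\<in>Pow {..<length w} - {{}}. a (nths w S) * d (nths w (- S)))"
      using split[of a d w] that by simp
    then show "d w = T d w" using a0 by (simp add: T_def field_simps)
  qed
  have contr: "T f w = T f' w" if "\<And>y. length y < length w \<Longrightarrow> f y = f' y" for f f' w
  proof -
    have "(\<Sum>S\<in>Pow {..<length w} - {{}}. a (nths w S) * f (nths w (- S))) =
          (\<Sum>S\<in>Pow {..<length w} - {{}}. a (nths w S) * f' (nths w (- S)))"
    proof (rule sum.cong)
      fix S assume S: "S \<in> Pow {..<length w} - {{}}"
      then obtain i where i: "i \<in> S" "i < length w" by auto
      have "0 < card {i. i < length w \<and> i \<in> S}" using i by (subst card_gt_0_iff) auto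
      then have "0 < length (nths w S)" by (simp add: length_nths)
      then have "length (nths w (- S)) < length w" using nths_len_split[of w S] by linarith
      then show "a (nths w S) * f (nths w (- S)) = a (nths w S) * f' (nths w (- S))" using that by simp
    qed simp
    then show ?thesis by (simp add: T_def)
  qed
  show ?thesis
    by (rule fp_unique1[where sz=length and T=T]) (rule contr, use fix1 b b' in auto)
qed



lemma wf_bad: "\<not> set w \<subseteq> {0..m} \<Longrightarrow> wfcomp m q dd e i w = 0"
  by (simp add: wfcomp_def)

lemma shinv_wf:
  assumes c0: "\<forall>j\<in>{1..q}. c j [] = 0" and d0: "d i z0 \<noteq> 0" and i: "i \<in> {1..m}"
  shows "shuffle (wfcomp m q (cinv m q d) c i) (wfcomp m q d c i) = one_s"
proof
  fix w
  show "shuffle (wfcomp m q (cinv m q d) c i) (wfcomp m q d c i) w = one_s w"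
  proof (cases "set w \<subseteq> {0..m}")
    case True
    define N where "N = length w"
    define A where "A = Aset q N"
    define SM where "SM alpha = shmon c alpha [1..<q+1]" for alpha
    define dinv where "dinv = cinv_s q (d i)"
    have ci: "cinv m q d i = dinv" using i by (simp add: cinv_def dinv_def)
    have "shuffle (wfcomp m q (cinv m q d) c i) (wfcomp m q d c i) w =
          shuffle (\<lambda>v. \<Sum>alpha\<in>A. dinv alpha * SM alpha v) (\<lambda>v. \<Sum>beta\<in>A. d i beta * SM beta v) w"
    proof (rule sh_cong)
      fix v assume "subw v w"
      then have v: "set v \<subseteq> {0..m}" "length v \<le> N" using True by (auto simp: subw_def N_def)
      show "wfcomp m q (cinv m q d) c i v = (\<Sum>alpha\<in>A. dinv alpha * SM alpha v)"
        using wf_uniform[of q c i m, OF c0 i v, of "cinv m q d"] by (simp add: ci A_def SM_def)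
      show "wfcomp m q d c i v = (\<Sum>beta\<in>A. d i beta * SM beta v)"
        using wf_uniform[of q c i m, OF c0 i v, of d] by (simp add: A_def SM_def)
    qed
    also have "\<dots> = (\<Sum>alpha\<in>A. \<Sum>beta\<in>A. dinv alpha * d i beta * shuffle (SM alpha) (SM beta) w)"
      by (simp add: sh_sum_left sh_sum_right sh_scale_left sh_scale_right sum_distrib_left mult.assoc)
    also have "\<dots> = (\<Sum>alpha\<in>A. \<Sum>beta\<in>A. dinv alpha * d i beta * SM (\<lambda>j. alpha j + beta j) w)"
      by (simp add: SM_def shmon_add)
    also have "\<dots> = (\<Sum>gam\<in>A. cprod (d i) dinv gam * SM gam w)"
      unfolding A_def
    proof (rule regroup)
      fix gam assume "gam \<in> mons q" "N < deg q gam"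
      then show "SM gam w = 0" using SM_ord[of q c, OF c0, of gam w] by (force simp: SM_def N_def)
    qed
    also have "\<dots> = (\<Sum>gam\<in>A. (if gam = z0 then SM gam w else 0))"
    proof (rule sum.cong)
      fix gam assume "gam \<in> A"
      then have "gam \<in> mons q" by (simp add: A_def Aset_def)
      then show "cprod (d i) dinv gam * SM gam w = (if gam = z0 then SM gam w else 0)"
        using cinv_s_prop[of "d i" q, OF d0] by (simp add: cinvP_def dinv_def)
    qed simp
    also have "\<dots> = SM z0 w"
    proof (subst sum.delta)
      show "finite A" by (simp add: A_def finite_Aset)
      have "z0 \<in> A" by (simp add: A_def Aset_def mons_def)
      then show "(if z0 \<in> A then SM z0 w else 0) = SM z0 w" by simp
    qed
    also have "\<dots> = one_s w" by (simp add: SM_def shmon_zero)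
    finally show ?thesis .
  next
    case False
    have "shuffle (wfcomp m q (cinv m q d) c i) (wfcomp m q d c i) w = 0"
    proof (rule ccontr)
      assume "shuffle (wfcomp m q (cinv m q d) c i) (wfcomp m q d c i) w \<noteq> 0"
      then have "set w \<subseteq> {0..m}"
        by (rule sh_letters[rotated 2]) (use wf_bad in blast)+
      then show False using False by simp
    qed
    moreover have "w \<noteq> []" using False by auto
    ultimately show ?thesis by (simp add: one_s_def)
  qed
qed

lemma shinv_eq:
  assumes c0: "\<forall>j\<in>{1..q}. c j [] = 0" and d0: "\<forall>i\<in>{1..m}. d i z0 \<noteq> 0"
  shows "shinv m (wfcomp m q (cinv m q d) c) = wfcomp m q d c"
proof (intro ext)
  fix i w
  show "shinv m (wfcomp m q (cinv m q d) c) i w = wfcomp m q d c i w"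
  proof (cases "i \<in> {1..m}")
    case True
    let ?g = "wfcomp m q (cinv m q d) c i" and ?b = "wfcomp m q d c i"
    have sb: "shuffle ?g ?b = one_s" using shinv_wf[of q c d i m, OF c0 _ True] d0 True by blast
    have e1: "shuffle ?g ?b [] = 1" using sb by (simp add: one_s_def)
    then have "?g [] * ?b [] = 1" by (simp only: sh_nil)
    then have g0: "?g [] \<noteq> 0" by auto
    have "shinv_s ?g = ?b"
      unfolding shinv_s_def
      by (rule the_equality) (use sb shinv_unique[where a="?g", OF g0] in auto)
    then show ?thesis using True by (simp add: shinv_def)
  next
    case False
    show ?thesis unfolding shinv_def wfcomp_def by (simp only: False if_False simp_thms)
  qed
qed

lemma phi_cong:
  "(\<And>j v. length v < length w \<Longrightarrow> H j v = H' j v) \<Longrightarrow> phi H eta w = phi H' eta w"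
proof (induction eta arbitrary: w)
  case Nil then show ?case by simp
next
  case (Cons i eta)
  show ?case
  proof (cases w)
    case Nil then show ?thesis by simp
  next
    case (Cons k w')
    have "shuffle (G H i) (phi H eta) w' = shuffle (G H' i) (phi H' eta) w'"
    proof (rule sh_cong)
      fix v assume "subw v w'"
      then have lv: "length v < length w" by (simp add: subw_def Cons)
      then show "G H i v = G H' i v" using Cons.prems by (simp add: G_def)
      show "phi H eta v = phi H' eta v"
        by (rule Cons.IH) (use Cons.prems lv in auto)
    qed
    then show ?thesis by (simp add: Cons phi_Cons_Cons)
  qed
qed

lemma mix_contr:
  "(\<And>j v. length v < length w \<Longrightarrow> H j v = H' j v) \<Longrightarrow> mixcomp l m X H i w = mixcomp l m X H' i w"
  unfolding mixcomp_def using phi_cong[of w H H'] by simp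

lemma wf_cong_le:
  assumes "\<And>j v. length v \<le> length w \<Longrightarrow> e j v = e' j v"
  shows "wfcomp m q dd e i w = wfcomp m q dd e' i w"
proof -
  have "shmon e alpha [1..<q+1] w = shmon e' alpha [1..<q+1] w" for alpha
    by (rule shmon_cong) (use assms in \<open>auto simp: subw_def\<close>)
  then show ?thesis by (simp add: wfcomp_def)
qed

lemma compinv_fix: "compinv m X = mixcomp m m (shinv m X) (compinv m X)"
proof -
  let ?T = "mixcomp m m (shinv m X)"
  have ex: "\<exists>h. h = ?T h"
    by (rule fp_exists_gen[where sz=length]) (rule mix_contr)
  have un: "h = h'" if "h = ?T h" "h' = ?T h'" for h h'
    by (rule fp_unique_gen[where sz=length and T="?T"]) (rule mix_contr, use that in auto)
  have "\<exists>!h. h = ?T h" using ex un by metis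
  then have "(THE h. h = ?T h) = ?T (THE h. h = ?T h)" by (rule theI')
  then show ?thesis by (simp add: compinv_def)
qed

theorem theorem17:
  fixes m q :: nat and c :: vncs and d :: vcs
  assumes c_proper: "c \<in> proper_series q m"
    and d_ser: "d \<in> cseries m q"
    and d_pi: "\<forall>i\<in>{1..m}. d i (\<lambda>_. 0) \<noteq> 0"
  shows "mixcomp q m c (compinv m (wfcomp m q (cinv m q d) c)) \<in> proper_series q m
       \<and> mixcomp q m c (compinv m (wfcomp m q (cinv m q d) c))
           = mixcomp q m c (wfcomp m q d (mixcomp q m c (compinv m (wfcomp m q (cinv m q d) c))))
       \<and> (\<forall>e\<in>proper_series q m. e = mixcomp q m c (wfcomp m q d e)
             \<longrightarrow> e = mixcomp q m c (compinv m (wfcomp m q (cinv m q d) c)))"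
proof -
  define g where "g = wfcomp m q (cinv m q d) c"
  define h where "h = compinv m g"
  define F where "F = mixcomp q m c h"
  have c0: "\<forall>j\<in>{1..q}. c j [] = 0" using c_proper by (simp add: proper_series_def)
  have hF: "h = wfcomp m q d F"
  proof -
    have "h = mixcomp m m (shinv m g) h" unfolding h_def by (rule compinv_fix)
    also have "\<dots> = mixcomp m m (wfcomp m q d c) h"
      unfolding g_def using shinv_eq[of q c m d, OF c0 d_pi] by simp
    also have "\<dots> = wfcomp m q d F"
      unfolding F_def using WM[where q=q and c=c, OF c0] by simp
    finally show ?thesis .
  qed
  have P1: "F \<in> proper_series q m"
  proof -
    have "F \<in> series q m" by (auto simp: series_def F_def mixcomp_def)
    moreover have "F j [] = 0" for j
    proof -
      have "{eta. set eta \<subseteq> {0..m} \<and> length eta \<le> length ([]::nat list)} = {[]}" by auto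
      then show ?thesis using c0 by (simp add: F_def mixcomp_def)
    qed
    ultimately show ?thesis by (simp add: proper_series_def)
  qed
  have P2: "F = mixcomp q m c (wfcomp m q d F)"
    using hF by (simp add: F_def)
  have P3: "e = F" if "e \<in> proper_series q m" "e = mixcomp q m c (wfcomp m q d e)" for e
  proof (rule fp_unique_gen[where sz=length and T="\<lambda>e. mixcomp q m c (wfcomp m q d e)"])
    fix f f' :: vncs and i and w :: "nat list"
    assume a: "\<And>j y. length y < length w \<Longrightarrow> f j y = f' j y"
    show "mixcomp q m c (wfcomp m q d f) i w = mixcomp q m c (wfcomp m q d f') i w"
    proof (rule mix_contr)
      fix j and v :: "nat list" assume "length v < length w"
      then show "wfcomp m q d f j v = wfcomp m q d f' j v"
        using a by (intro wf_cong_le) auto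
    qed
  qed (use that P2 in auto)
  show ?thesis using P1 P2 P3 unfolding F_def h_def g_def by blast
qed

end
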